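(* For $x\in(0,1)$ and $z\in(0,\infty)$, the functions $f_1(k)=\sin(x^k)^{1/k}$, $f_2(k)=\cos(x^k)^{1/k}$ and $f_4(k)=\tanh(z^k)^{1/k}$ are increasing on $(0,\infty)$. *)

theory Defs
  imports "HOL-Analysis.Analysis"
begin

end

theory Submission imports Defs begin

lemma mono_from_deriv:
  fixes F F' :: "real \<Rightarrow> real"
  assumes "\<And>u. u \<ge> 0 \<Longrightarrow> u \<le> v \<Longrightarrow> (F has_real_derivative F' u) (at u)"
    and "\<And>u. u \<ge> 0 \<Longrightarrow> u \<le> v \<Longrightarrow> F' u \<ge> 0" and "0 \<le> v"
  shows "F 0 \<le> F v"
proof (rule DERIV_nonneg_imp_increasing_open[OF assms(3)])
  fix y assume "0 < y" "y < v"
  then show "\<exists>d. (F has_real_derivative d) (at y) \<and> 0 \<le> d" using assms(1,2) by (meson less_imp_le)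
next
  show "continuous_on {0..v} F"
    by (rule continuous_at_imp_continuous_on) (metis DERIV_isCont assms(1) atLeastAtMost_iff)
qed

lemma generic:
  fixes g g' :: "real \<Rightarrow> real" and t :: real
  assumes t: "t > 0"
    and pos: "\<And>k. k > 0 \<Longrightarrow> g (t powr k) > 0"
    and der: "\<And>k. k > 0 \<Longrightarrow> (g has_real_derivative g' (t powr k)) (at (t powr k))"
    and H: "\<And>k. k > 0 \<Longrightarrow> t powr k * g' (t powr k) * ln (t powr k) / g (t powr k) - ln (g (t powr k)) \<ge> 0"
  shows "mono_on {0<..} (\<lambda>k. g (t powr k) powr (1 / k))"
proof (rule mono_onI)
  define L where "L k = ln (g (t powr k)) / k" for k
  have D: "(L has_real_derivative
     ((g' (t powr k) * (t powr k * ln t)) / g (t powr k) * k - ln (g (t powr k))) / k^2) (at k)"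
    if k: "k > 0" for k
  proof -
    have d1: "((\<lambda>k. t powr k) has_real_derivative t powr k * ln t) (at k)"
      using t by (auto intro!: derivative_eq_intros)
    have d2: "((\<lambda>k. g (t powr k)) has_real_derivative g' (t powr k) * (t powr k * ln t)) (at k)"
      by (rule DERIV_chain2[OF der[OF k] d1])
    have d3: "((\<lambda>k. ln (g (t powr k))) has_real_derivative (g' (t powr k) * (t powr k * ln t)) / g (t powr k)) (at k)"
      using DERIV_chain2[OF DERIV_ln_divide[OF pos[OF k]] d2] by simp
    show ?thesis unfolding L_def using DERIV_divide[OF d3 DERIV_ident] k
      by (simp add: power2_eq_square)
  qed
  fix a b :: real assume ab: "a \<in> {0<..}" "b \<in> {0<..}" "a \<le> b"
  have "L a \<le> L b"
  proof (rule DERIV_nonneg_imp_increasing_open[OF ab(3)])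
    fix y assume y: "a < y" "y < b"
    hence yp: "y > 0" using ab by auto
    have "t powr y * g' (t powr y) * ln (t powr y) / g (t powr y) - ln (g (t powr y)) =
       (g' (t powr y) * (t powr y * ln t)) / g (t powr y) * y - ln (g (t powr y))"
      using t by (simp add: ln_powr field_simps)
    hence "0 \<le> ((g' (t powr y) * (t powr y * ln t)) / g (t powr y) * y - ln (g (t powr y)))"
      using H[OF yp] by linarith
    hence "0 \<le> ((g' (t powr y) * (t powr y * ln t)) / g (t powr y) * y - ln (g (t powr y))) / y^2"
      by simp
    then show "\<exists>d. (L has_real_derivative d) (at y) \<and> 0 \<le> d" using D[OF yp] by blast
  next
    show "continuous_on {a..b} L"
      by (rule continuous_at_imp_continuous_on) (use ab in \<open>auto intro!: DERIV_isCont[OF D]\<close>)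
  qed
  moreover have "g (t powr k) powr (1 / k) = exp (L k)" if "k > 0" for k
    using pos[OF that] by (simp add: powr_def L_def)
  ultimately show "g (t powr a) powr (1 / a) \<le> g (t powr b) powr (1 / b)" using ab by simp
qed

lemma sin_aux: fixes u :: real assumes "0 \<le> u" "u \<le> 1" shows "u * cos u \<le> sin u"
proof -
  have "(\<lambda>u. sin u - u * cos u) 0 \<le> (\<lambda>u. sin u - u * cos u) u"
  proof (rule mono_from_deriv[where F' = "\<lambda>u. u * sin u"])
    fix w :: real assume "0 \<le> w" "w \<le> u"
    show "((\<lambda>u. sin u - u * cos u) has_real_derivative w * sin w) (at w)"
      by (auto intro!: derivative_eq_intros)
    have "w \<le> pi" using \<open>w \<le> u\<close> assms pi_gt3 by linarith
    thus "0 \<le> w * sin w" using \<open>0 \<le> w\<close> by (simp add: sin_ge_zero)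
  qed (use assms in auto)
  thus ?thesis by simp
qed

lemma tanh_le: fixes u :: real assumes "0 \<le> u" shows "tanh u \<le> u"
proof -
  have "(\<lambda>u. u - tanh u) 0 \<le> (\<lambda>u. u - tanh u) u"
  proof (rule mono_from_deriv[where F' = "\<lambda>u. tanh u ^ 2"])
    fix w :: real assume "0 \<le> w" "w \<le> u"
    show "((\<lambda>u. u - tanh u) has_real_derivative tanh w ^ 2) (at w)"
      by (auto intro!: derivative_eq_intros)
  qed (use assms in auto)
  thus ?thesis by simp
qed

lemma tanh_aux: fixes u :: real assumes "0 \<le> u" shows "u * (1 - tanh u ^ 2) \<le> tanh u"
proof -
  have "(\<lambda>u. tanh u - u * (1 - tanh u ^ 2)) 0 \<le> (\<lambda>u. tanh u - u * (1 - tanh u ^ 2)) u"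
  proof (rule mono_from_deriv[where F' = "\<lambda>u. 2 * u * tanh u * (1 - tanh u ^ 2)"])
    fix w :: real assume w: "0 \<le> w" "w \<le> u"
    show "((\<lambda>u. tanh u - u * (1 - tanh u ^ 2)) has_real_derivative 2 * w * tanh w * (1 - tanh w ^ 2)) (at w)"
      by (auto intro!: derivative_eq_intros simp: algebra_simps power2_eq_square)
    have "tanh w < 1" by (rule tanh_real_lt_1)
    moreover have "0 \<le> tanh w" using w by simp
    ultimately have "tanh w ^ 2 \<le> 1" by (simp add: power_le_one)
    thus "0 \<le> 2 * w * tanh w * (1 - tanh w ^ 2)" using w by simp
  qed (use assms in auto)
  thus ?thesis by simp
qed

theorem lemma4p1:
  fixes x z :: real
  assumes "0 < x" and "x < 1" and "0 < z"
  shows "mono_on {0<..} (\<lambda>k::real. sin (x powr k) powr (1 / k)) \<and>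
         mono_on {0<..} (\<lambda>k::real. cos (x powr k) powr (1 / k)) \<and>
         mono_on {0<..} (\<lambda>k::real. tanh (z powr k) powr (1 / k))"
proof (intro conjI)
  have u01: "0 < x powr k \<and> x powr k < 1" if "k > 0" for k
    using assms that powr_less_mono2[of k x 1] by simp
  have pi2: "1 < pi / 2" using pi_gt3 by linarith
  show "mono_on {0<..} (\<lambda>k::real. sin (x powr k) powr (1 / k))"
  proof (rule generic[where g' = cos])
    fix k :: real assume k: "k > 0"
    define u where "u = x powr k"
    have u: "0 < u" "u < 1" using u01[OF k] by (auto simp: u_def)
    have su: "0 < sin u" using u pi_gt3 by (intro sin_gt_zero) auto
    thus "sin (x powr k) > 0" by (simp add: u_def)
    show "(sin has_real_derivative cos (x powr k)) (at (x powr k))" by (rule DERIV_sin)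
    have cu: "0 < cos u" using u pi2 by (intro cos_gt_zero) auto
    define c where "c = u * cos u / sin u"
    have c: "0 \<le> c" "c \<le> 1" using sin_aux[of u] u su cu by (auto simp: c_def)
    have lu: "ln u \<le> 0" using u by simp
    have "ln u * 1 \<le> ln u * c" using c lu by (intro mult_left_mono_neg) auto
    moreover have "ln (sin u) \<le> ln u" using su sin_x_le_x[of u] u by simp
    ultimately have "0 \<le> c * ln u - ln (sin u)" by (simp add: mult.commute)
    thus "0 \<le> x powr k * cos (x powr k) * ln (x powr k) / sin (x powr k) - ln (sin (x powr k))"
      by (simp add: c_def u_def[symmetric] field_simps)
  qed (use assms in auto)
  show "mono_on {0<..} (\<lambda>k::real. cos (x powr k) powr (1 / k))"
  proof (rule generic[where g' = "\<lambda>u. - sin u"])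
    fix k :: real assume k: "k > 0"
    define u where "u = x powr k"
    have u: "0 < u" "u < 1" using u01[OF k] by (auto simp: u_def)
    have su: "0 < sin u" using u pi_gt3 by (intro sin_gt_zero) auto
    have cu: "0 < cos u" using u pi2 by (intro cos_gt_zero) auto
    thus "cos (x powr k) > 0" by (simp add: u_def)
    show "(cos has_real_derivative - sin (x powr k)) (at (x powr k))" by (rule DERIV_cos)
    have lu: "ln u \<le> 0" using u by simp
    have "0 \<le> u * sin u * (- ln u) / cos u" using u su cu lu
      by (intro divide_nonneg_pos mult_nonneg_nonneg) auto
    moreover have "ln (cos u) \<le> 0" using cu by simp
    ultimately have "0 \<le> u * (- sin u) * ln u / cos u - ln (cos u)" by simp
    thus "0 \<le> x powr k * - sin (x powr k) * ln (x powr k) / cos (x powr k) - ln (cos (x powr k))"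
      by (simp add: u_def[symmetric])
  qed (use assms in auto)
  show "mono_on {0<..} (\<lambda>k::real. tanh (z powr k) powr (1 / k))"
  proof (rule generic[where g' = "\<lambda>u. 1 - tanh u ^ 2"])
    fix k :: real assume k: "k > 0"
    define u where "u = z powr k"
    have u: "0 < u" using assms by (simp add: u_def)
    have tu: "0 < tanh u" "tanh u < 1" using u tanh_real_lt_1 by auto
    thus "tanh (z powr k) > 0" by (simp add: u_def)
    show "(tanh has_real_derivative 1 - tanh (z powr k) ^ 2) (at (z powr k))"
      by (auto intro!: derivative_eq_intros)
    have t2: "tanh u ^ 2 \<le> 1" using tu by (simp add: power_le_one)
    define c where "c = u * (1 - tanh u ^ 2) / tanh u"
    have c: "0 \<le> c" "c \<le> 1" using tanh_aux[of u] u tu t2 by (auto simp: c_def)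
    have "0 \<le> c * ln u - ln (tanh u)"
    proof (cases "u \<ge> 1")
      case True
      hence "0 \<le> c * ln u" using c by simp
      moreover have "ln (tanh u) \<le> 0" using tu by simp
      ultimately show ?thesis by simp
    next
      case False
      have lu: "ln u \<le> 0" using u False by simp
      have "ln u * 1 \<le> ln u * c" using c lu by (intro mult_left_mono_neg) auto
      moreover have "ln (tanh u) \<le> ln u" using tu tanh_le[of u] u by simp
      ultimately show ?thesis by (simp add: mult.commute)
    qed
    thus "0 \<le> z powr k * (1 - tanh (z powr k) ^ 2) * ln (z powr k) / tanh (z powr k) - ln (tanh (z powr k))"
      by (simp add: c_def u_def[symmetric] field_simps)
  qed (use assms in auto)
qed

end
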